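(* Let $A \in \mathbb{Z}^{(n-2)\times n}$ be an integer matrix of rank $n-2$ with $\ker_{\mathbb{Z}} A \cap \mathbb{N}^n = \{0\}$, let $B$ be a Gale transform of $A$ whose rows $b_1,\dots,b_n$ are all nonzero, and let $\tilde B = \{\tilde b_1,\dots,\tilde b_n\} \subseteq \mathbb{Z}^2$ be the reduced Gale transform of $A$. If the toric ideal $I_A$ is strongly robust, then $\mathrm{conv}(\tilde B)$ is a two-dimensional polygon that is centrally symmetric about the origin, i.e. $\mathrm{conv}(\tilde B) = -\mathrm{conv}(\tilde B)$; equivalently, for every vertex $v$ of $\mathrm{conv}(\tilde B)$, $-v$ is also a vertex.
   Context: For $A \in \mathbb{Z}^{d\times n}$ of rank $d$, the toric ideal is $I_A = \langle p^u - p^v : u,v\in\mathbb{N}^n,\ Au = Av\rangle \subseteq \mathbb{K}[p_1,\dots,p_n]$, where $p^u=\prod_i p_i^{u_i}$. For $u \in \mathbb{N}^n$, its fiber is $\mathcal{F}(u)=\{v\in\mathbb{N}^n : Av = Au\}$. A binomial $p^u - p^v$ is indispensable if $\mathcal{F}(u)=\{u,v\}$ and $\mathrm{supp}(u)\cap\mathrm{supp}(v)=\emptyset$ (where $\mathrm{supp}(u)=\{i : u_i\neq 0\}$); the set of indispensable binomials is $\mathcal{S}(A)$. A binomial $p^u-p^v\in I_A$ is primitive if there is no other binomial $p^{u'}-p^{v'}\in I_A$ with $p^{u'}\mid p^u$ and $p^{v'}\mid p^v$; the Graver basis $\mathcal{G}r(A)$ is the set of primitive binomials of $I_A$. $I_A$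 is strongly robust if $\mathcal{S}(A)=\mathcal{G}r(A)$. A Gale transform of $A$ (rank $n-2$) is an $n\times 2$ integer matrix $B$ whose columns form a basis of the lattice $\ker_{\mathbb{Z}}A$; write its rows as $b_i=(b_{i1},b_{i2})$. The reduced Gale transform is $\tilde B=\{\tilde b_1,\dots,\tilde b_n\}$ with $\tilde b_i = \gcd(b_{i1},b_{i2})^{-1}(-b_{i2},b_{i1})$, i.e. each row rotated by $90^\circ$ and divided by the gcd of its entries. *)

theory Defs
  imports "HOL-Analysis.Analysis"
begin

text \<open>An integer matrix A with m rows and n columns is a function
  A :: nat => nat => int, entry A i j for i < m, j < n.  Integer vectors of length n are
  functions nat => int of which only the indices < n matter; vectors in N^n are functions
  nat => nat vanishing outside {0..<n}.  A binomial p^u - p^v is represented by the pair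
  (u, v) of exponent vectors, with u ~= v (so that the binomial is nonzero and the pair
  determines the binomial).\<close>

definition matvec :: "nat \<Rightarrow> (nat \<Rightarrow> nat \<Rightarrow> int) \<Rightarrow> (nat \<Rightarrow> int) \<Rightarrow> nat \<Rightarrow> int" where
  "matvec n A x i = (\<Sum>j<n. A i j * x j)"

definition full_row_rank :: "nat \<Rightarrow> nat \<Rightarrow> (nat \<Rightarrow> nat \<Rightarrow> int) \<Rightarrow> bool" where
  "full_row_rank m n A \<longleftrightarrow>
     (\<forall>c :: nat \<Rightarrow> rat. (\<forall>j<n. (\<Sum>i<m. c i * of_int (A i j)) = 0) \<longrightarrow> (\<forall>i<m. c i = 0))"

definition natvecs :: "nat \<Rightarrow> (nat \<Rightarrow> nat) set" where
  "natvecs n = {u. \<forall>j\<ge>n. u j = 0}"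

definition fiber :: "nat \<Rightarrow> nat \<Rightarrow> (nat \<Rightarrow> nat \<Rightarrow> int) \<Rightarrow> (nat \<Rightarrow> nat) \<Rightarrow> (nat \<Rightarrow> nat) set" where
  "fiber m n A u = {v \<in> natvecs n.
      \<forall>i<m. matvec n A (\<lambda>j. int (v j)) i = matvec n A (\<lambda>j. int (u j)) i}"

text \<open>p^u - p^v is a (nonzero) binomial of I_A.\<close>
definition toric_binomial :: "nat \<Rightarrow> nat \<Rightarrow> (nat \<Rightarrow> nat \<Rightarrow> int) \<Rightarrow> (nat \<Rightarrow> nat) \<Rightarrow> (nat \<Rightarrow> nat) \<Rightarrow> bool" where
  "toric_binomial m n A u v \<longleftrightarrow> u \<in> natvecs n \<and> u \<noteq> v \<and> v \<in> fiber m n A u"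

definition indispensables :: "nat \<Rightarrow> nat \<Rightarrow> (nat \<Rightarrow> nat \<Rightarrow> int) \<Rightarrow> ((nat \<Rightarrow> nat) \<times> (nat \<Rightarrow> nat)) set" where
  "indispensables m n A = {(u, v). toric_binomial m n A u v \<and> fiber m n A u = {u, v}
       \<and> {j. u j \<noteq> 0} \<inter> {j. v j \<noteq> 0} = {}}"

text \<open>Primitive: no other binomial p^u' - p^v' of I_A with p^u' | p^u and p^v' | p^v
  (divisibility of monomials = componentwise order of exponents).\<close>
definition graver :: "nat \<Rightarrow> nat \<Rightarrow> (nat \<Rightarrow> nat \<Rightarrow> int) \<Rightarrow> ((nat \<Rightarrow> nat) \<times> (nat \<Rightarrow> nat)) set" where
  "graver m n A = {(u, v). toric_binomial m n A u v \<and>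
      \<not> (\<exists>u' v'. (u', v') \<noteq> (u, v) \<and> toric_binomial m n A u' v' \<and> u' \<le> u \<and> v' \<le> v)}"

definition strongly_robust :: "nat \<Rightarrow> nat \<Rightarrow> (nat \<Rightarrow> nat \<Rightarrow> int) \<Rightarrow> bool" where
  "strongly_robust m n A \<longleftrightarrow> indispensables m n A = graver m n A"

definition gale_transform :: "nat \<Rightarrow> nat \<Rightarrow> (nat \<Rightarrow> nat \<Rightarrow> int) \<Rightarrow> (nat \<Rightarrow> int \<times> int) \<Rightarrow> bool" where
  "gale_transform m n A b \<longleftrightarrow>
     (\<forall>i<m. matvec n A (\<lambda>j. fst (b j)) i = 0) \<and>
     (\<forall>i<m. matvec n A (\<lambda>j. snd (b j)) i = 0) \<and>
     (\<forall>x :: nat \<Rightarrow> int. (\<forall>i<m. matvec n A x i = 0) \<longrightarrow>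
        (\<exists>k1 k2 :: int. \<forall>j<n. x j = k1 * fst (b j) + k2 * snd (b j))) \<and>
     (\<forall>k1 k2 :: int. (\<forall>j<n. k1 * fst (b j) + k2 * snd (b j) = 0) \<longrightarrow> k1 = 0 \<and> k2 = 0)"

text \<open>Reduced Gale vector: row rotated by 90 degrees and divided by the gcd of its entries,
  viewed as a point of R^2.\<close>
definition reduced_gale :: "int \<times> int \<Rightarrow> real \<times> real" where
  "reduced_gale p = (let g = gcd (fst p) (snd p) in
      (real_of_int (- snd p div g), real_of_int (fst p div g)))"

end

theory Submission
  imports Defs
begin


definition rg :: "int \<times> int \<Rightarrow> real \<times> real" where
  "rg v = (- of_int (snd v), of_int (fst v))"

lemma comb3:
  fixes x y z v :: "real \<times> real"
  assumes "x \<in> S" "y \<in> S" "z \<in> S" "0 \<le> a" "0 \<le> b" "0 \<le> c" "a + b + c = 1"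
    "v = a *\<^sub>R x + b *\<^sub>R y + c *\<^sub>R z"
  shows "v \<in> convex hull S"
proof -
  have "v \<in> convex hull {x,y,z}" unfolding convex_hull_3 using assms by blast
  moreover have "convex hull {x,y,z} \<subseteq> convex hull S" using assms by (intro hull_mono) auto
  ultimately show ?thesis by blast
qed

lemma comb_div:
  fixes S x y z a b c :: real
  assumes "S \<noteq> 0"
  shows "x/S*a + y/S*b + z/S*c = (x*a+y*b+z*c)/S"
  using assms by (simp add: field_simps)

lemma par:
  fixes p q u0 w0 v1 v2 :: int
  assumes "p*u0+q*w0 = -1" "-v1*q + v2*p = 0"
  shows "v1 = -(v1*u0+v2*w0)*p" "v2 = -(v1*u0+v2*w0)*q"
proof -
  have "-(v1*u0+v2*w0)*p = -v1*(p*u0+q*w0) + w0*(v1*q - v2*p)" by (simp add: algebra_simps)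
  then show "v1 = -(v1*u0+v2*w0)*p" using assms by simp
  have "-(v1*u0+v2*w0)*q = -v2*(p*u0+q*w0) - u0*(v1*q - v2*p)" by (simp add: algebra_simps)
  then show "v2 = -(v1*u0+v2*w0)*q" using assms by simp
qed

lemma geom:
  fixes \<beta> :: "nat \<Rightarrow> int \<times> int" and p q u0 w0 :: int and a d :: "nat \<Rightarrow> int"
  assumes i: "i < n" and bi: "\<beta> i = (p,q)" and bez: "p*u0 + q*w0 = -1"
    and a_def: "\<And>l. a l = - fst (\<beta> l) * q + snd (\<beta> l) * p"
    and d_def: "\<And>l. d l = fst (\<beta> l) * u0 + snd (\<beta> l) * w0"
    and neg: "\<exists>k<n. a k < 0"
    and H: "\<forall>t::int. \<exists>l<n. d l + t * a l > max (a l) 0"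
  shows "- rg (\<beta> i) \<in> convex hull (rg ` \<beta> ` {..<n})"
proof (rule ccontr)
  assume nc: "- rg (\<beta> i) \<notin> convex hull (rg ` \<beta> ` {..<n})"
  let ?S = "rg ` \<beta> ` {..<n}"
  have mem: "rg (\<beta> l) \<in> ?S" if "l < n" for l using that by auto
  have pa: "fst (\<beta> l) = - d l * p" "snd (\<beta> l) = - d l * q" if "a l = 0" for l
    using par[OF bez, of "fst (\<beta> l)" "snd (\<beta> l)"] that a_def[of l] d_def[of l] by simp_all
  have step1: "d l \<le> 0" if "l < n" "a l = 0" for l
  proof (rule ccontr)
    assume "\<not> d l \<le> 0"
    hence dp: "d l \<ge> 1" by simp
    define D where "D = real_of_int (d l)"
    have D1: "D \<ge> 1" using dp unfolding D_def by simp
    have "- rg (\<beta> i) \<in> convex hull ?S"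
    proof (rule comb3[OF mem[OF \<open>l<n\<close>] mem[OF \<open>l<n\<close>] mem[OF i], of "2/(1+D)" 0 "(D-1)/(1+D)"])
      show "0 \<le> 2/(1+D)" using D1 by simp
      show "0 \<le> (0::real)" by simp
      show "0 \<le> (D-1)/(1+D)" using D1 by simp
      show "2/(1+D) + 0 + (D-1)/(1+D) = 1" using D1
        by (simp add: diff_divide_distrib[symmetric] add_divide_distrib[symmetric])
      have e1: "real_of_int (fst (\<beta> l)) = - D * p" "real_of_int (snd (\<beta> l)) = - D * q"
        using pa[OF \<open>a l = 0\<close>] unfolding D_def by simp_all
      show "- rg (\<beta> i) = (2/(1+D)) *\<^sub>R rg (\<beta> l) + 0 *\<^sub>R rg (\<beta> l) + ((D-1)/(1+D)) *\<^sub>R rg (\<beta> i)"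
      proof -
        have nz: "1 + (D*D + D*2) \<noteq> 0" using D1 by (smt (verit) mult_nonneg_nonneg)
        show ?thesis using D1 nz unfolding rg_def bi by (simp add: e1 field_simps prod_eq_iff)
      qed
    qed
    with nc show False by simp
  qed
  define K where "K = {k. k < n \<and> a k < 0}"
  have Kf: "finite K" "K \<noteq> {}" using neg unfolding K_def by auto
  define f where "f k = \<lceil>real_of_int (d k) / real_of_int (- a k)\<rceil>" for k
  define t where "t = Max (f ` K)"
  have "t \<in> f ` K" using Max_in[of "f ` K"] Kf unfolding t_def by auto
  then obtain k0 where k0: "k0 \<in> K" "t = f k0" by auto
  have tge: "t \<ge> f k" if "k \<in> K" for k using Kf that unfolding t_def by simp
  have step2: "d k + t * a k \<le> 0" if "k \<in> K" for k
  proof -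
    have ak: "a k < 0" using that unfolding K_def by simp
    have "real_of_int t \<ge> real_of_int (d k) / real_of_int (- a k)"
      using tge[OF that] unfolding f_def by linarith
    hence "real_of_int t * real_of_int (- a k) \<ge> real_of_int (d k)" using ak
      by (simp add: field_simps)
    hence "t * (- a k) \<ge> d k" by (metis of_int_le_iff of_int_mult)
    thus ?thesis by (simp add: algebra_simps)
  qed
  have k0a: "a k0 < 0" "k0 < n" using k0 unfolding K_def by auto
  have "real_of_int t < real_of_int (d k0) / real_of_int (- a k0) + 1"
    using k0 unfolding f_def by linarith
  hence "real_of_int t * real_of_int (- a k0) < real_of_int (d k0) + real_of_int (- a k0)"
    using k0a by (simp add: field_simps)
  hence "t * (- a k0) < d k0 - a k0" by (metis of_int_add of_int_less_iff of_int_mult of_int_minus diff_conv_add_uminus)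
  hence tk0: "t * (- a k0) \<le> d k0 - a k0 - 1" by simp
  obtain j where j: "j < n" "d j + t * a j > max (a j) 0" using H by blast
  have aj: "a j > 0"
  proof -
    have "a j \<noteq> 0" using step1[OF j(1)] j(2) by force
    moreover have "\<not> a j < 0" using step2[of j] j unfolding K_def by force
    ultimately show ?thesis by simp
  qed
  define AA where "AA = a j"
  define BB where "BB = - a k0"
  define E where "E = BB * d j + AA * d k0"
  have AA: "AA > 0" and BB: "BB > 0" using aj k0a unfolding AA_def BB_def by auto
  have h1: "t * AA + d j \<ge> AA + 1" using j(2) aj unfolding AA_def by (simp add: algebra_simps)
  have h2: "t * BB \<le> d k0 + BB - 1" using tk0 unfolding BB_def by simp
  have "BB * (t*AA + d j) \<ge> BB * (AA+1)" using h1 BB by (simp add: mult_left_mono)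
  moreover have "AA * (t*BB) \<le> AA * (d k0 + BB - 1)" using h2 AA by (simp add: mult_left_mono)
  ultimately have EE: "E \<ge> AA + BB" unfolding E_def by (simp add: algebra_simps)
  define v1 where "v1 = BB * fst (\<beta> j) + AA * fst (\<beta> k0)"
  define v2 where "v2 = BB * snd (\<beta> j) + AA * snd (\<beta> k0)"
  have "-v1*q + v2*p = BB * a j + AA * a k0"
    unfolding v1_def v2_def a_def by (simp add: algebra_simps)
  hence vc: "-v1*q + v2*p = 0" unfolding AA_def BB_def by simp
  have vd: "v1*u0+v2*w0 = E"
    unfolding v1_def v2_def E_def d_def by (simp add: algebra_simps)
  have pv: "v1 = - E * p" "v2 = - E * q" using par[OF bez vc, unfolded vd] by simp_all
  define A' where "A' = real_of_int AA"
  define B' where "B' = real_of_int BB"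
  define E' where "E' = real_of_int E"
  have A'p: "A' > 0" and B'p: "B' > 0" and E'ge: "E' \<ge> A' + B'"
    using AA BB EE unfolding A'_def B'_def E'_def by simp_all
  have r1: "B' * fst (\<beta> j) + A' * fst (\<beta> k0) = - E' * p"
    using arg_cong[OF pv(1), of real_of_int] unfolding v1_def A'_def B'_def E'_def by simp
  have r2: "B' * snd (\<beta> j) + A' * snd (\<beta> k0) = - E' * q"
    using arg_cong[OF pv(2), of real_of_int] unfolding v2_def A'_def B'_def E'_def by simp
  have "- rg (\<beta> i) \<in> convex hull ?S"
  proof (rule comb3[OF mem[OF j(1)] mem[OF k0a(2)] mem[OF i],
        of "2*B'/(A'+B'+E')" "2*A'/(A'+B'+E')" "(E'-A'-B')/(A'+B'+E')"])
    have S: "A'+B'+E' > 0" using A'p B'p E'ge by simp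
    show "0 \<le> 2*B'/(A'+B'+E')" using S B'p by simp
    show "0 \<le> 2*A'/(A'+B'+E')" using S A'p by simp
    show "0 \<le> (E'-A'-B')/(A'+B'+E')" using S E'ge by simp
    have "2*B'/(A'+B'+E') + 2*A'/(A'+B'+E') + (E'-A'-B')/(A'+B'+E')
       = (2*B' + 2*A' + (E'-A'-B'))/(A'+B'+E')" by (simp only: add_divide_distrib diff_divide_distrib)
    also have "\<dots> = (A'+B'+E')/(A'+B'+E')" by (simp add: algebra_simps)
    also have "\<dots> = 1" using S by simp
    finally show "2*B'/(A'+B'+E') + 2*A'/(A'+B'+E') + (E'-A'-B')/(A'+B'+E') = 1" .
    have Sn: "A'+B'+E' \<noteq> 0" using S by simp
    have x1: "2*B'/(A'+B'+E') * of_int (snd (\<beta> j)) + 2*A'/(A'+B'+E') * of_int (snd (\<beta> k0))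
        + (E'-A'-B')/(A'+B'+E') * q = - q"
    proof -
      have "2*B' * of_int (snd (\<beta> j)) + 2*A' * of_int (snd (\<beta> k0)) + (E'-A'-B') * q
          = 2*(B' * snd (\<beta> j) + A' * snd (\<beta> k0)) + (E'-A'-B') * q" by (simp add: algebra_simps)
      also have "\<dots> = - q * (A'+B'+E')" using r2 by (simp add: algebra_simps)
      finally show ?thesis unfolding comb_div[OF Sn] using Sn by simp
    qed
    have x2: "2*B'/(A'+B'+E') * of_int (fst (\<beta> j)) + 2*A'/(A'+B'+E') * of_int (fst (\<beta> k0))
        + (E'-A'-B')/(A'+B'+E') * p = - p"
    proof -
      have "2*B' * of_int (fst (\<beta> j)) + 2*A' * of_int (fst (\<beta> k0)) + (E'-A'-B') * p
          = 2*(B' * fst (\<beta> j) + A' * fst (\<beta> k0)) + (E'-A'-B') * p" by (simp add: algebra_simps)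
      also have "\<dots> = - p * (A'+B'+E')" using r1 by (simp add: algebra_simps)
      finally show ?thesis unfolding comb_div[OF Sn] using Sn by simp
    qed
    show "- rg (\<beta> i) = (2*B'/(A'+B'+E')) *\<^sub>R rg (\<beta> j) + (2*A'/(A'+B'+E')) *\<^sub>R rg (\<beta> k0)
       + ((E'-A'-B')/(A'+B'+E')) *\<^sub>R rg (\<beta> i)"
      using x1 x2 unfolding rg_def bi prod_eq_iff by (simp del: of_int_minus add: mult_minus_right[symmetric])
  qed
  with nc show False by simp
qed



definition X :: "(nat \<Rightarrow> int \<times> int) \<Rightarrow> int \<times> int \<Rightarrow> nat \<Rightarrow> int" where
  "X b w j = fst w * fst (b j) + snd w * snd (b j)"

lemma matvec_diff: "matvec n A (\<lambda>j. f j - g j) i = matvec n A f i - matvec n A g i"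
  unfolding matvec_def by (simp add: right_diff_distrib sum_subtractf)

lemma matvec_cong: "(\<And>j. j < n \<Longrightarrow> f j = g j) \<Longrightarrow> matvec n A f i = matvec n A g i"
  unfolding matvec_def by (rule sum.cong) auto

lemma gale_ker:
  assumes "gale_transform m n A b" "i < m"
  shows "matvec n A (X b w) i = 0"
proof -
  have "matvec n A (X b w) i = fst w * matvec n A (\<lambda>j. fst (b j)) i + snd w * matvec n A (\<lambda>j. snd (b j)) i"
  proof -
    have "matvec n A (X b w) i = (\<Sum>j<n. fst w * (A i j * fst (b j)) + snd w * (A i j * snd (b j)))"
      unfolding matvec_def X_def by (rule sum.cong) (simp_all add: algebra_simps)
    also have "\<dots> = fst w * matvec n A (\<lambda>j. fst (b j)) i + snd w * matvec n A (\<lambda>j. snd (b j)) i"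
      unfolding matvec_def by (simp add: sum.distrib sum_distrib_left)
    finally show ?thesis .
  qed
  moreover have "matvec n A (\<lambda>j. fst (b j)) i = 0" "matvec n A (\<lambda>j. snd (b j)) i = 0"
    using assms unfolding gale_transform_def by blast+
  ultimately show ?thesis by simp
qed

lemma gale_inj:
  assumes "gale_transform m n A b" "\<forall>j<n. X b w j = 0"
  shows "w = 0"
proof -
  have "fst w = 0 \<and> snd w = 0" using assms unfolding gale_transform_def X_def by blast
  then show ?thesis by (simp add: prod_eq_iff)
qed

lemma gale_pos:
  assumes g: "gale_transform m n A b"
    and pos: "\<forall>u \<in> natvecs n. (\<forall>i<m. matvec n A (\<lambda>j. int (u j)) i = 0) \<longrightarrow> (\<forall>j. u j = 0)"
    and w: "w \<noteq> 0"
  shows "\<exists>k<n. X b w k < 0"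
proof (rule ccontr)
  assume "\<not> ?thesis"
  hence nn: "\<forall>k<n. X b w k \<ge> 0" by auto
  define u where "u = (\<lambda>j. if j < n then nat (X b w j) else 0)"
  have "u \<in> natvecs n" unfolding natvecs_def u_def by simp
  moreover have "\<forall>i<m. matvec n A (\<lambda>j. int (u j)) i = 0"
  proof (intro allI impI)
    fix i assume "i < m"
    have "matvec n A (\<lambda>j. int (u j)) i = matvec n A (X b w) i"
      by (rule matvec_cong) (use nn in \<open>simp add: u_def\<close>)
    then show "matvec n A (\<lambda>j. int (u j)) i = 0" using gale_ker[OF g \<open>i<m\<close>] by simp
  qed
  ultimately have "\<forall>j. u j = 0" using pos by blast
  have "\<forall>j<n. X b w j = 0"
  proof (intro allI impI)
    fix j assume "j < n"
    then have "nat (X b w j) = 0" using \<open>\<forall>j. u j = 0\<close> unfolding u_def by (metis (mono_tags))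
    moreover have "X b w j \<ge> 0" using nn \<open>j<n\<close> by blast
    ultimately show "X b w j = 0" by simp
  qed
  hence "w = 0" by (rule gale_inj[OF g])
  with w show False by simp
qed

lemma toric_main:
  assumes g: "gale_transform m n A b"
    and pos: "\<forall>u \<in> natvecs n. (\<forall>i<m. matvec n A (\<lambda>j. int (u j)) i = 0) \<longrightarrow> (\<forall>j. u j = 0)"
    and sr: "strongly_robust m n A"
    and i: "i < n" and ci: "X b c i = 0" and c0: "c \<noteq> 0"
    and circ: "\<forall>w. X b w i = 0 \<longrightarrow> (\<exists>s. w = (s * fst c, s * snd c))"
    and y0: "y \<noteq> 0" and yc: "y \<noteq> c"
    and yP: "\<forall>l<n. X b y l \<le> max (X b c l) 0"
  shows False
proof -
  have Xneg: "X b (- c) k = - X b c k" for k unfolding X_def by simp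
  have "- c \<noteq> 0" using c0 by simp
  then obtain kp where kp0: "kp < n" "X b (- c) kp < 0" using gale_pos[OF g pos, of "-c"] by blast
  have kp: "kp < n" "X b c kp > 0" using kp0 Xneg[of kp] by simp_all
  define u where "u = (\<lambda>j. if j<n then nat (max (X b c j) 0) else 0)"
  define v where "v = (\<lambda>j. if j<n then nat (max (- X b c j) 0) else 0)"
  have uv: "int (u j) - int (v j) = X b c j" if "j < n" for j
    using that unfolding u_def v_def by auto
  have un: "u \<in> natvecs n" and vn: "v \<in> natvecs n" unfolding natvecs_def u_def v_def by auto
  have fibv: "v \<in> fiber m n A u"
    unfolding fiber_def
  proof (intro CollectI conjI allI impI vn)
    fix i' assume "i' < m"
    have "matvec n A (\<lambda>j. int (u j) - int (v j)) i' = matvec n A (X b c) i'"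
      by (rule matvec_cong) (simp add: uv)
    then show "matvec n A (\<lambda>j. int (v j)) i' = matvec n A (\<lambda>j. int (u j)) i'"
      using gale_ker[OF g \<open>i'<m\<close>] matvec_diff[of n A "\<lambda>j. int (u j)" "\<lambda>j. int (v j)" i'] by simp
  qed
  have uvne: "u \<noteq> v"
  proof
    assume "u = v"
    hence "u kp = v kp" by simp
    thus False using kp unfolding u_def v_def by simp
  qed
  have tb: "toric_binomial m n A u v" unfolding toric_binomial_def using un uvne fibv by simp
  have gr: "(u, v) \<in> graver m n A"
    unfolding graver_def
  proof (intro CollectI, simp only: prod.case, intro conjI tb notI)
    assume "\<exists>u' v'. (u', v') \<noteq> (u, v) \<and> toric_binomial m n A u' v' \<and> u' \<le> u \<and> v' \<le> v"
    then obtain u' v' where ne: "(u', v') \<noteq> (u, v)" and tb': "toric_binomial m n A u' v'"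
      and le1: "u' \<le> u" and le2: "v' \<le> v" by blast
    have u'n: "u' \<in> natvecs n" and ne': "u' \<noteq> v'" and fb: "v' \<in> fiber m n A u'"
      using tb' unfolding toric_binomial_def by auto
    have v'n: "v' \<in> natvecs n" using fb unfolding fiber_def by simp
    have ker: "\<forall>i'<m. matvec n A (\<lambda>j. int (u' j) - int (v' j)) i' = 0"
      using fb unfolding fiber_def by (simp add: matvec_diff)
    have G2: "\<forall>x :: nat \<Rightarrow> int. (\<forall>i<m. matvec n A x i = 0) \<longrightarrow>
        (\<exists>k1 k2 :: int. \<forall>j<n. x j = k1 * fst (b j) + k2 * snd (b j))"
      using g unfolding gale_transform_def by (elim conjE)
    obtain k1 k2 where kk: "\<forall>j<n. int (u' j) - int (v' j) = k1 * fst (b j) + k2 * snd (b j)"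
      using G2[rule_format, OF ker[rule_format]] by blast
    have xk: "int (u' j) - int (v' j) = X b (k1,k2) j" if "j<n" for j using kk that unfolding X_def by simp
    have "u i = 0" "v i = 0" using ci i unfolding u_def v_def by auto
    moreover have "u' i \<le> u i" "v' i \<le> v i" using le1 le2 by (simp_all add: le_funD)
    ultimately have "u' i = 0" "v' i = 0" by simp_all
    hence "X b (k1,k2) i = 0" using xk[OF i] by simp
    then obtain s where s: "(k1,k2) = (s * fst c, s * snd c)" using circ by blast
    have xs: "int (u' j) - int (v' j) = s * X b c j" if "j<n" for j
      using xk[OF that] s unfolding X_def by (simp add: algebra_simps)
    have "v kp = 0" using kp unfolding v_def by simp
    moreover have "v' kp \<le> v kp" using le2 by (simp add: le_funD)
    ultimately have "v' kp = 0" by simp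
    hence "int (u' kp) = s * X b c kp" using xs[OF kp(1)] by simp
    moreover have "u' kp \<le> u kp" using le1 by (simp add: le_funD)
    moreover have "int (u kp) = X b c kp" using kp unfolding u_def by simp
    ultimately have sb: "0 \<le> s * X b c kp" "s * X b c kp \<le> X b c kp" by linarith+
    have "s \<ge> 0"
    proof (rule ccontr)
      assume "\<not> s \<ge> 0" hence "s * X b c kp < 0" using kp(2) by (simp add: mult_neg_pos)
      with sb show False by simp
    qed
    moreover have "s \<le> 1"
    proof (rule ccontr)
      assume "\<not> s \<le> 1" hence "s \<ge> 2" by simp
      hence "s * X b c kp \<ge> 2 * X b c kp" using kp(2) by (simp add: mult_right_mono)
      with sb kp(2) show False by simp
    qed
    ultimately have "s = 0 \<or> s = 1" by auto
    then show False
    proof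
      assume "s = 0"
      have "u' j = v' j" for j
      proof (cases "j < n")
        case True then show ?thesis using xs[OF True] \<open>s=0\<close> by simp
      next
        case False then show ?thesis using u'n v'n unfolding natvecs_def by simp
      qed
      hence "u' = v'" by auto
      with ne' show False by simp
    next
      assume "s = 1"
      have "u' j = u j \<and> v' j = v j" for j
      proof (cases "j < n")
        case True
        have e: "int (u' j) - int (v' j) = int (u j) - int (v j)" using xs[OF True] uv[OF True] \<open>s=1\<close> by simp
        have z: "u j = 0 \<or> v j = 0" unfolding u_def v_def by auto
        have "u' j \<le> u j" "v' j \<le> v j" using le1 le2 by (simp_all add: le_funD)
        then show ?thesis using e z by linarith
      next
        case False
        have "v' j \<le> v j" using le2 by (simp add: le_funD)
        then show ?thesis using False u'n unfolding natvecs_def u_def v_def by simp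
      qed
      hence "u' = u" "v' = v" by auto
      with ne show False by simp
    qed
  qed
  hence ind: "(u, v) \<in> indispensables m n A" using sr unfolding strongly_robust_def by simp
  hence fu: "fiber m n A u = {u, v}" unfolding indispensables_def by simp
  define z where "z = (\<lambda>j. if j<n then nat (max (X b c j) 0 - X b y j) else 0)"
  have zz: "int (z j) = int (u j) - X b y j" if "j < n" for j
    using that yP unfolding z_def u_def by auto
  have "z \<in> fiber m n A u"
    unfolding fiber_def
  proof (intro CollectI conjI allI impI)
    show "z \<in> natvecs n" unfolding z_def natvecs_def by simp
    fix i' assume "i' < m"
    have "matvec n A (\<lambda>j. int (z j)) i' = matvec n A (\<lambda>j. int (u j) - X b y j) i'"
      by (rule matvec_cong) (simp add: zz)
    then show "matvec n A (\<lambda>j. int (z j)) i' = matvec n A (\<lambda>j. int (u j)) i'"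
      using gale_ker[OF g \<open>i'<m\<close>, of y] matvec_diff[of n A "\<lambda>j. int (u j)" "X b y" i'] by simp
  qed
  hence "z = u \<or> z = v" using fu by simp
  then show False
  proof
    assume "z = u"
    hence "\<forall>j<n. X b y j = 0" using zz by simp
    hence "y = 0" by (rule gale_inj[OF g])
    with y0 show False by simp
  next
    assume "z = v"
    have "\<forall>j<n. X b (fst y - fst c, snd y - snd c) j = 0"
    proof (intro allI impI)
      fix j assume j: "j < n"
      have "X b y j = X b c j" using zz[OF j] uv[OF j] \<open>z = v\<close> by simp
      then show "X b (fst y - fst c, snd y - snd c) j = 0" unfolding X_def by (simp add: algebra_simps)
    qed
    hence "(fst y - fst c, snd y - snd c) = 0" by (rule gale_inj[OF g])
    hence "y = c" by (simp add: prod_eq_iff)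
    with yc show False by simp
  qed
qed



lemma lin_neg: "linear (uminus :: real \<times> real \<Rightarrow> real \<times> real)"
  by (rule linearI) (simp_all add: algebra_simps)

theorem theorem1p1:
  fixes n :: nat and A :: "nat \<Rightarrow> nat \<Rightarrow> int" and b :: "nat \<Rightarrow> int \<times> int"
  assumes "n \<ge> 2"
    and "full_row_rank (n - 2) n A"
    and "\<forall>u \<in> natvecs n. (\<forall>i<n - 2. matvec n A (\<lambda>j. int (u j)) i = 0) \<longrightarrow> (\<forall>j. u j = 0)"
    and "gale_transform (n - 2) n A b"
    and "\<forall>i<n. b i \<noteq> (0, 0)"
    and "strongly_robust (n - 2) n A"
  shows "aff_dim (convex hull ((\<lambda>i. reduced_gale (b i)) ` {..<n})) = 2 \<and>
         convex hull ((\<lambda>i. reduced_gale (b i)) ` {..<n}) = uminus ` (convex hull ((\<lambda>i. reduced_gale (b i)) ` {..<n}))"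
proof -
  note n2 = assms(1) and pos = assms(3) and g = assms(4) and nz = assms(5) and sr = assms(6)
  define gg where "gg l = gcd (fst (b l)) (snd (b l))" for l
  define \<beta> where "\<beta> l = (fst (b l) div gg l, snd (b l) div gg l)" for l
  have ggpos: "gg l > 0" if "l < n" for l
    using nz that unfolding gg_def by (cases "b l") auto
  have bfac: "fst (b l) = gg l * fst (\<beta> l)" "snd (b l) = gg l * snd (\<beta> l)" for l
    unfolding \<beta>_def gg_def by simp_all
  have rgeq: "reduced_gale (b l) = rg (\<beta> l)" for l
  proof -
    have "gg l dvd snd (b l)" unfolding gg_def by simp
    then have "(- snd (b l)) div gg l = - (snd (b l) div gg l)"
      by (metis dvd_div_neg dvd_neg_div div_minus_minus minus_minus)
    then show ?thesis unfolding reduced_gale_def rg_def \<beta>_def gg_def Let_def by simp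
  qed
  have Xfac: "X b w l = gg l * (fst w * fst (\<beta> l) + snd w * snd (\<beta> l))" for w l
    unfolding X_def using bfac[of l] by (simp add: algebra_simps)
  have Req: "(\<lambda>i. reduced_gale (b i)) ` {..<n} = rg ` \<beta> ` {..<n}"
    using rgeq by (auto simp: image_image)
  define R where "R = rg ` \<beta> ` {..<n}"
  have key: "- rg (\<beta> i) \<in> convex hull R \<and> (\<exists>k<n. - fst (\<beta> k) * snd (\<beta> i) + snd (\<beta> k) * fst (\<beta> i) < 0)"
    if i: "i < n" for i
  proof -
    obtain p q where bi: "\<beta> i = (p, q)" by (cases "\<beta> i")
    have pq0: "p \<noteq> 0 \<or> q \<noteq> 0"
    proof (rule ccontr)
      assume "\<not> (p \<noteq> 0 \<or> q \<noteq> 0)"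
      then have "b i = (0,0)" using bfac[of i] bi by (simp add: prod_eq_iff)
      with nz i show False by simp
    qed
    have "coprime p q"
    proof -
      have "fst (b i) \<noteq> 0 \<or> snd (b i) \<noteq> 0" using nz i by (cases "b i") auto
      then show ?thesis using div_gcd_coprime[of "fst (b i)" "snd (b i)"] bi
        unfolding \<beta>_def gg_def by simp
    qed
    then have "gcd p q = 1" by simp
    then obtain u1 v1 where "u1 * p + v1 * q = 1" using bezout_int[of p q] by auto
    then have bez: "p * (- u1) + q * (- v1) = -1" by (simp add: algebra_simps)
    define u0 where "u0 = - u1"
    define w0 where "w0 = - v1"
    have bez': "p * u0 + q * w0 = -1" using bez unfolding u0_def w0_def .
    define a where "a l = - fst (\<beta> l) * q + snd (\<beta> l) * p" for l
    define d where "d l = fst (\<beta> l) * u0 + snd (\<beta> l) * w0" for l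
    define c where "c = (- q, p)"
    have Xc: "X b c l = gg l * a l" for l unfolding Xfac c_def a_def by (simp add: algebra_simps)
    have c0: "c \<noteq> 0" using pq0 unfolding c_def by (auto simp: prod_eq_iff)
    obtain k where k: "k < n" "X b c k < 0" using gale_pos[OF g pos c0] by blast
    have ak: "a k < 0" using k Xc[of k] ggpos[OF k(1)] by (simp add: mult_less_0_iff)
    have H: "\<forall>t::int. \<exists>l<n. d l + t * a l > max (a l) 0"
    proof (rule ccontr)
      assume "\<not> ?thesis"
      then obtain t where "\<not> (\<exists>l<n. d l + t * a l > max (a l) 0)" by blast
      then have t: "\<forall>l<n. d l + t * a l \<le> max (a l) 0" by (meson not_less)
      define y where "y = (u0 + t * (- q), w0 + t * p)"
      have Xy: "X b y l = gg l * (d l + t * a l)" for l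
        unfolding Xfac y_def a_def d_def by (simp add: algebra_simps)
      have yP: "\<forall>l<n. X b y l \<le> max (X b c l) 0"
      proof (intro allI impI)
        fix l assume l: "l < n"
        have "gg l * (d l + t * a l) \<le> gg l * max (a l) 0"
          using t l ggpos[OF l] by (simp add: mult_left_mono)
        also have "\<dots> = max (gg l * a l) 0" using ggpos[OF l]
          by (simp add: max_def mult_le_0_iff)
        finally show "X b y l \<le> max (X b c l) 0" unfolding Xy Xc .
      qed
      have ai: "a i = 0" unfolding a_def bi by simp
      have di: "d i = -1" unfolding d_def bi using bez' by simp
      have y0: "y \<noteq> 0"
      proof
        assume "y = 0"
        then have "X b y i = 0" unfolding X_def by simp
        then show False using Xy[of i] ai di ggpos[OF i] by simp
      qed
      have yc: "y \<noteq> c"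
      proof
        assume "y = c"
        then have "X b y i = X b c i" by simp
        then show False using Xy[of i] Xc[of i] ai di ggpos[OF i] by simp
      qed
      have ci: "X b c i = 0" using Xc[of i] ai by simp
      have circ: "\<forall>w. X b w i = 0 \<longrightarrow> (\<exists>s. w = (s * fst c, s * snd c))"
      proof (intro allI impI)
        fix w assume "X b w i = 0"
        then have e: "fst w * p + snd w * q = 0" using Xfac[of w i] ggpos[OF i] bi by simp
        define s where "s = fst w * w0 - snd w * u0"
        have "fst w = s * (- q)"
        proof -
          have "s * (- q) = - fst w * (p * u0 + q * w0) + u0 * (fst w * p + snd w * q)"
            unfolding s_def by (simp add: algebra_simps)
          then show ?thesis using e bez' by simp
        qed
        moreover have "snd w = s * p"
        proof -
          have "s * p = - snd w * (p * u0 + q * w0) + w0 * (fst w * p + snd w * q)"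
            unfolding s_def by (simp add: algebra_simps)
          then show ?thesis using e bez' by simp
        qed
        ultimately show "\<exists>s. w = (s * fst c, s * snd c)" unfolding c_def by (auto simp: prod_eq_iff)
      qed
      show False using toric_main[OF g pos sr i ci c0 circ y0 yc yP] .
    qed
    have "- rg (\<beta> i) \<in> convex hull R"
      unfolding R_def
    proof -
      have ex: "\<exists>k<n. a k < 0" using ak k(1) by blast
      show "- rg (\<beta> i) \<in> convex hull (rg ` \<beta> ` {..<n})"
        using geom[OF i bi bez' a_def d_def ex H] .
    qed
    moreover have "\<exists>k<n. - fst (\<beta> k) * snd (\<beta> i) + snd (\<beta> k) * fst (\<beta> i) < 0"
      using ak k(1) unfolding a_def bi by auto
    ultimately show ?thesis by blast
  qed
  have symm: "uminus ` R \<subseteq> convex hull R"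
  proof
    fix x assume "x \<in> uminus ` R"
    then obtain i where "i < n" "x = - rg (\<beta> i)" unfolding R_def by auto
    then show "x \<in> convex hull R" using key by blast
  qed
  have sub1: "uminus ` (convex hull R) \<subseteq> convex hull R"
  proof -
    have "uminus ` (convex hull R) = convex hull (uminus ` R)"
      by (rule convex_hull_linear_image[OF lin_neg])
    also have "\<dots> \<subseteq> convex hull R"
      by (rule hull_minimal[OF symm]) (rule convex_convex_hull)
    finally show ?thesis .
  qed
  have eq: "convex hull R = uminus ` (convex hull R)"
  proof
    show "uminus ` (convex hull R) \<subseteq> convex hull R" by (rule sub1)
    show "convex hull R \<subseteq> uminus ` (convex hull R)"
    proof
      fix x assume "x \<in> convex hull R"
      then have "- x \<in> convex hull R" using sub1 by blast
      then show "x \<in> uminus ` (convex hull R)" by (rule rev_image_eqI) simp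
    qed
  qed
  have n0: "0 < n" using n2 by simp
  obtain k where k: "k < n" "- fst (\<beta> k) * snd (\<beta> 0) + snd (\<beta> k) * fst (\<beta> 0) < 0"
    using key[OF n0] by blast
  have r0: "rg (\<beta> 0) \<in> convex hull R" unfolding R_def using n0 by (intro hull_inc) auto
  have rk: "rg (\<beta> k) \<in> convex hull R" unfolding R_def using k by (intro hull_inc) auto
  have mr0: "- rg (\<beta> 0) \<in> convex hull R" using key[OF n0] by blast
  have "(1/2::real) *\<^sub>R rg (\<beta> 0) + (1/2::real) *\<^sub>R (- rg (\<beta> 0)) \<in> convex hull R"
    by (rule convexD[OF convex_convex_hull r0 mr0]) auto
  then have z: "0 \<in> convex hull R" by (simp add: algebra_simps)
  have ncol: "\<not> collinear {0, rg (\<beta> 0), rg (\<beta> k)}"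
  proof
    assume "collinear {0, rg (\<beta> 0), rg (\<beta> k)}"
    then consider "rg (\<beta> 0) = 0" | "rg (\<beta> k) = 0" | cc where "rg (\<beta> k) = cc *\<^sub>R rg (\<beta> 0)"
      unfolding collinear_lemma by blast
    then show False
    proof cases
      case 1 then show False using k(2) unfolding rg_def by (simp add: prod_eq_iff)
    next
      case 2 then show False using k(2) unfolding rg_def by (simp add: prod_eq_iff)
    next
      case 3
      then have e1: "real_of_int (snd (\<beta> k)) = cc * snd (\<beta> 0)"
        and e2: "real_of_int (fst (\<beta> k)) = cc * fst (\<beta> 0)"
        unfolding rg_def by (simp_all add: prod_eq_iff)
      have "real_of_int (- fst (\<beta> k) * snd (\<beta> 0) + snd (\<beta> k) * fst (\<beta> 0)) = 0"
        using e1 e2 by simp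
      then show False using k(2) by linarith
    qed
  qed
  have "\<not> collinear (convex hull R)"
    using ncol collinear_subset[of "convex hull R" "{0, rg (\<beta> 0), rg (\<beta> k)}"] z r0 rk by blast
  then have "aff_dim (convex hull R) > 1" using collinear_aff_dim by (metis not_le)
  moreover have "aff_dim (convex hull R) \<le> 2" using aff_dim_le_DIM[of "convex hull R"] by simp
  ultimately have "aff_dim (convex hull R) = 2" by simp
  then show ?thesis using eq unfolding Req R_def by simp
qed

end
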